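(* Let $\gamma:S^1\to\mathbb{R}^{2d}$ be a closed symplectically convex curve parametrized so that $\omega(\gamma'(t),\gamma''(t))=1$, and let $\Sigma=\{P:\exists t\in S^1,\ \omega(P-\gamma(t),\gamma'(t))=0,\ \omega(P-\gamma(t),\gamma''(t))=0\}$ be the wall. Then in a sufficiently small neighborhood of $\gamma$ the local multiplicity is either $0$ or $2$: every point $P\notin\Sigma$ sufficiently close to $\gamma$ either cannot be written as $P=\gamma(t)+v$ with $\omega(\gamma'(t),v)=0$, or can be written in this way in precisely two different ways, where in both cases one only considers representations with $\gamma(t)$ close to $P$ and $v$ small.
   Context: $\mathbb{R}^{2d}$ carries its standard symplectic form $\omega$; $\gamma$ is symplectically convex if $\omega(\gamma'(t),\gamma''(t))>0$ for all $t$. The multiplicity at a regular value $P$ of $\Psi(v,t)=\gamma(t)+v$ (defined on $\{(v,t):\omega(v,\gamma'(t))=0\}$) is the number of its preimages, i.e. of representations $P=\gamma(t)+v$ with $\omega(\gamma'(t),v)=0$; $\Sigma$ is the set of singular values of $\Psi$. *)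

theory Defs
  imports "HOL-Analysis.Analysis"
begin

text \<open>R^{2d} is modelled as R^d x R^d (q,p); the standard symplectic form is
  omega((q,p),(q',p')) = q . p' - p . q'.\<close>
definition symp :: "((real^'n) \<times> (real^'n)) \<Rightarrow> ((real^'n) \<times> (real^'n)) \<Rightarrow> real" where
  "symp x y = fst x \<bullet> snd y - snd x \<bullet> fst y"

definition wall :: "(real \<Rightarrow> (real^'n) \<times> (real^'n)) \<Rightarrow> (real \<Rightarrow> (real^'n) \<times> (real^'n))
     \<Rightarrow> (real \<Rightarrow> (real^'n) \<times> (real^'n)) \<Rightarrow> ((real^'n) \<times> (real^'n)) set" where
  "wall g g1 g2 = {P. \<exists>t. symp (P - g t) (g1 t) = 0 \<and> symp (P - g t) (g2 t) = 0}"

end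

theory Submission
  imports Defs
begin

lemma periodic_int:
  fixes f :: "real \<Rightarrow> 'a"
  assumes per: "\<And>t. f (t + L) = f t"
  shows "f (s + real_of_int n * L) = f s"
proof -
  have nat: "f (s + real m * L) = f s" for m :: nat and s
  proof (induction m)
    case 0 then show ?case by simp
  next
    case (Suc m)
    have "f (s + real (Suc m) * L) = f ((s + real m * L) + L)" by (simp add: algebra_simps)
    also have "\<dots> = f s" using per Suc by simp
    finally show ?case .
  qed
  show ?thesis
  proof (cases "n \<ge> 0")
    case True
    then obtain m where "n = int m" using nonneg_eq_int by blast
    then show ?thesis using nat by simp
  next
    case False
    then have "- n \<ge> 0" by simp
    then obtain m where "- n = int m" using nonneg_eq_int by blast
    then have m: "n = - int m" by simp
    have "f s = f ((s - real m * L) + real m * L)" by simp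
    also have "\<dots> = f (s - real m * L)" using nat by blast
    finally show ?thesis using m by simp
  qed
qed

lemma periodic_bounded:
  fixes f :: "real \<Rightarrow> 'a::real_normed_vector"
  assumes cont: "continuous_on UNIV f" and L: "L > 0" and per: "\<And>t. f (t + L) = f t"
  shows "\<exists>M. \<forall>t. norm (f t) \<le> M"
proof -
  have "compact (f ` {0..L})"
    using cont by (intro compact_continuous_image) (auto intro: continuous_on_subset)
  then have "bounded (f ` {0..L})" by (rule compact_imp_bounded)
  then obtain B where B0: "\<forall>y\<in>f ` {0..L}. norm y \<le> B"
    unfolding bounded_iff by blast
  have B: "norm (f x) \<le> B" if "x \<in> {0..L}" for x
    using B0 that by blast
  have "norm (f t) \<le> B" for t
  proof -
    define n where "n = \<lfloor>t / L\<rfloor>"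
    define s where "s = t - real_of_int n * L"
    have "real_of_int n \<le> t / L" "t / L < real_of_int n + 1"
      unfolding n_def by linarith+
    then have "real_of_int n * L \<le> t" "t < (real_of_int n + 1) * L"
      using L by (simp_all add: field_simps)
    then have "s \<in> {0..L}" unfolding s_def by (auto simp: algebra_simps)
    moreover have "f t = f s"
      using periodic_int[of f L s n, OF per] unfolding s_def by simp
    ultimately show ?thesis using B by simp
  qed
  then show ?thesis by blast
qed

lemma symp_anti: "symp x y = - symp y x"
  unfolding symp_def by (simp add: inner_commute)

lemma symp_bound: "\<bar>symp x y\<bar> \<le> 2 * norm x * norm y"
proof -
  have a: "\<bar>fst x \<bullet> snd y\<bar> \<le> norm x * norm y"
  proof -
    have "\<bar>fst x \<bullet> snd y\<bar> \<le> norm (fst x) * norm (snd y)" by (rule Cauchy_Schwarz_ineq2)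
    also have "\<dots> \<le> norm x * norm y"
      by (rule mult_mono) (use norm_fst_le[of "fst x" "snd x"] norm_snd_le[of "snd y" "fst y"] in auto)
    finally show ?thesis .
  qed
  have b: "\<bar>snd x \<bullet> fst y\<bar> \<le> norm x * norm y"
  proof -
    have "\<bar>snd x \<bullet> fst y\<bar> \<le> norm (snd x) * norm (fst y)" by (rule Cauchy_Schwarz_ineq2)
    also have "\<dots> \<le> norm x * norm y"
      by (rule mult_mono) (use norm_snd_le[of "snd x" "fst x"] norm_fst_le[of "fst y" "snd y"] in auto)
    finally show ?thesis .
  qed
  show ?thesis unfolding symp_def using a b by linarith
qed

lemma symp_neg_right: "symp x (- y) = - symp x y"
  unfolding symp_def by simp

lemma symp_self: "symp x x = 0"
  unfolding symp_def by (simp add: inner_commute)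

lemma deriv_symp:
  assumes "(a has_vector_derivative a') (at t)" "(b has_vector_derivative b') (at t)"
  shows "((\<lambda>t. symp (a t) (b t)) has_real_derivative (symp a' (b t) + symp (a t) b')) (at t)"
proof -
  have fa: "((\<lambda>t. fst (a t)) has_vector_derivative fst a') (at t)"
   and sa: "((\<lambda>t. snd (a t)) has_vector_derivative snd a') (at t)"
   and fb: "((\<lambda>t. fst (b t)) has_vector_derivative fst b') (at t)"
   and sb: "((\<lambda>t. snd (b t)) has_vector_derivative snd b') (at t)"
    using has_derivative_fst[OF assms(1)[unfolded has_vector_derivative_def]]
      has_derivative_snd[OF assms(1)[unfolded has_vector_derivative_def]]
      has_derivative_fst[OF assms(2)[unfolded has_vector_derivative_def]]
      has_derivative_snd[OF assms(2)[unfolded has_vector_derivative_def]]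
    unfolding has_vector_derivative_def by auto
  have 1: "((\<lambda>t. fst (a t) \<bullet> snd (b t)) has_real_derivative (fst a' \<bullet> snd (b t) + fst (a t) \<bullet> snd b')) (at t)"
    using has_derivative_inner[OF fa[unfolded has_vector_derivative_def] sb[unfolded has_vector_derivative_def]]
    unfolding has_field_derivative_def
    by (rule has_derivative_eq_rhs) (simp add: fun_eq_iff algebra_simps)
  have 2: "((\<lambda>t. snd (a t) \<bullet> fst (b t)) has_real_derivative (snd a' \<bullet> fst (b t) + snd (a t) \<bullet> fst b')) (at t)"
    using has_derivative_inner[OF sa[unfolded has_vector_derivative_def] fb[unfolded has_vector_derivative_def]]
    unfolding has_field_derivative_def
    by (rule has_derivative_eq_rhs) (simp add: fun_eq_iff algebra_simps)
  show ?thesis unfolding symp_def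
    using DERIV_diff[OF 1 2] by (simp add: algebra_simps)
qed

lemma mvt_bound:
  fixes g :: "real \<Rightarrow> 'a::real_normed_vector"
  assumes d: "\<And>t. (g has_vector_derivative g' t) (at t)" and M: "\<And>t. norm (g' t) \<le> M"
  shows "norm (g b - g a) \<le> M * \<bar>b - a\<bar>"
proof -
  have "norm (g b - g a) \<le> M * norm (b - a)"
  proof (rule differentiable_bound[where S=UNIV and f'="\<lambda>x h. h *\<^sub>R g' x"])
    show "convex (UNIV :: real set)" by simp
    fix x :: real
    show "(g has_derivative (\<lambda>h. h *\<^sub>R g' x)) (at x within UNIV)"
      using d[of x] unfolding has_vector_derivative_def by simp
    have "onorm (\<lambda>h::real. h *\<^sub>R g' x) = onorm (\<lambda>h::real. h) * norm (g' x)"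
      by (rule onorm_scaleR_left) (rule bounded_linear_ident)
    also have "\<dots> = norm (g' x)" by (simp add: onorm_id)
    finally show "onorm (\<lambda>h::real. h *\<^sub>R g' x) \<le> M" using M by simp
  qed auto
  then show ?thesis by simp
qed

lemma taylor_lb_right:
  fixes f f1 f2 :: "real \<Rightarrow> real"
  assumes d1: "\<And>t. (f has_real_derivative f1 t) (at t)"
    and d2: "\<And>t. (f1 has_real_derivative f2 t) (at t)"
    and c: "\<And>t. t0 \<le> t \<Longrightarrow> t \<le> t0 + h \<Longrightarrow> f2 t \<ge> c"
    and h: "h \<ge> 0"
  shows "f (t0 + h) \<ge> f t0 + f1 t0 * h + c * h^2 / 2"
proof -
  define g1 where "g1 s = f1 s - f1 t0 - c * (s - t0)" for s
  define g where "g s = f s - f t0 - f1 t0 * (s - t0) - c * (s - t0)^2 / 2" for s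
  have dg1: "(g1 has_real_derivative f2 s - c) (at s)" for s
    unfolding g1_def by (auto intro!: derivative_eq_intros d2)
  have dg: "(g has_real_derivative g1 s) (at s)" for s
    unfolding g_def g1_def by (auto intro!: derivative_eq_intros d1 simp: power2_eq_square; simp add: field_simps)
  have g1pos: "g1 s \<ge> 0" if "t0 \<le> s" "s \<le> t0 + h" for s
  proof -
    have "g1 t0 \<le> g1 s"
    proof (rule DERIV_nonneg_imp_nondecreasing[of t0 s g1, OF that(1)])
      fix x assume x: "t0 \<le> x" "x \<le> s"
      then have "c \<le> f2 x" using c that by auto
      then show "\<exists>y. DERIV g1 x :> y \<and> y \<ge> 0" using dg1[of x] by auto
    qed
    then show ?thesis by (simp add: g1_def)
  qed
  have "g t0 \<le> g (t0 + h)"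
  proof (rule DERIV_nonneg_imp_nondecreasing[of t0 "t0 + h" g])
    show "t0 \<le> t0 + h" using h by simp
    fix x assume x: "t0 \<le> x" "x \<le> t0 + h"
    then show "\<exists>y. DERIV g x :> y \<and> y \<ge> 0" using dg[of x] g1pos[OF x] by auto
  qed
  then show ?thesis by (simp add: g_def algebra_simps)
qed

lemma taylor_lb_left:
  fixes f f1 f2 :: "real \<Rightarrow> real"
  assumes d1: "\<And>t. (f has_real_derivative f1 t) (at t)"
    and d2: "\<And>t. (f1 has_real_derivative f2 t) (at t)"
    and c: "\<And>t. t0 - h \<le> t \<Longrightarrow> t \<le> t0 \<Longrightarrow> f2 t \<ge> c"
    and h: "h \<ge> 0"
  shows "f (t0 - h) \<ge> f t0 - f1 t0 * h + c * h^2 / 2"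
proof -
  define F where "F s = f (- s)" for s
  define F1 where "F1 s = - f1 (- s)" for s
  define F2 where "F2 s = f2 (- s)" for s
  have D1: "(F has_real_derivative F1 t) (at t)" for t
    unfolding F_def F1_def
    using DERIV_chain2[OF d1[of "- t"] DERIV_minus[OF DERIV_ident]]
    by simp
  have D2: "(F1 has_real_derivative F2 t) (at t)" for t
    unfolding F2_def F1_def
    using DERIV_minus[OF DERIV_chain2[OF d2[of "- t"] DERIV_minus[OF DERIV_ident]]]
    by simp
  have "F (- t0 + h) \<ge> F (- t0) + F1 (- t0) * h + c * h^2 / 2"
    by (rule taylor_lb_right[OF D1 D2 _ h]) (use c in \<open>auto simp: F2_def\<close>)
  then show ?thesis by (simp add: F_def F1_def)
qed

lemma zero_count:
  fixes f f1 f2 :: "real \<Rightarrow> real"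
  assumes d1: "\<And>t. (f has_real_derivative f1 t) (at t)"
    and d2: "\<And>t. (f1 has_real_derivative f2 t) (at t)"
    and pos: "\<And>t. a \<le> t \<Longrightarrow> t \<le> b \<Longrightarrow> f2 t > 0"
    and fa: "f a > 0" and fb: "f b > 0"
    and nw: "\<And>t. a < t \<Longrightarrow> t < b \<Longrightarrow> f t = 0 \<Longrightarrow> f1 t \<noteq> 0"
  shows "finite {t. a < t \<and> t < b \<and> f t = 0} \<and>
         (card {t. a < t \<and> t < b \<and> f t = 0} = 0 \<or> card {t. a < t \<and> t < b \<and> f t = 0} = 2)"
proof -
  let ?S = "{t. a < t \<and> t < b \<and> f t = 0}"
  have contf: "continuous_on X f" for X
    by (intro continuous_at_imp_continuous_on ballI DERIV_isCont[OF d1])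
  have mono1: "f1 u < f1 v" if "a \<le> u" "u < v" "v \<le> b" for u v
  proof (rule DERIV_pos_imp_increasing[of u v f1, OF that(2)])
    fix x assume x: "u \<le> x" "x \<le> v"
    then have "a \<le> x" "x \<le> b" using that by auto
    then show "\<exists>y. DERIV f1 x :> y \<and> y > 0" using d2[of x] pos[of x] by blast
  qed
  have rolle: "\<exists>z. x < z \<and> z < y \<and> f1 z = 0" if xy: "x < y" and fxy: "f x = 0" "f y = 0" for x y
  proof -
    have dif: "f differentiable (at s)" for s
      unfolding real_differentiable_def using d1[of s] by blast
    have "f x = f y" using fxy by simp
    then obtain z where z: "x < z" "z < y" "DERIV f z :> 0"
      using Rolle[where f=f and a=x and b=y, OF xy \<open>f x = f y\<close> contf] dif by blast
    then show ?thesis using DERIV_unique[OF z(3) d1[of z]] by auto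
  qed
  have no3: False if hyp: "x \<in> ?S" "y \<in> ?S" "z \<in> ?S" "x < y" "y < z" for x y z
  proof -
    obtain u where u: "x < u" "u < y" "f1 u = 0" using rolle[of x y] hyp by auto
    obtain v where v: "y < v" "v < z" "f1 v = 0" using rolle[of y z] hyp by auto
    have "f1 u < f1 v" using mono1[of u v] u v hyp by auto
    then show False using u v by simp
  qed
  show ?thesis
  proof (cases "?S = {}")
    case True then show ?thesis unfolding True by simp
  next
    case False
    then obtain z where z: "z \<in> ?S" by blast
    have fz1: "f1 z \<noteq> 0" using nw z by auto
    obtain w where w: "w \<in> ?S" "w \<noteq> z"
    proof (cases "f1 z < 0")
      case True
      obtain d where d: "d > 0" "\<And>h. h > 0 \<Longrightarrow> h < d \<Longrightarrow> f z > f (z + h)"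
        using DERIV_neg_dec_right[OF d1 True] by blast
      define h where "h = min (d/2) ((b - z)/2)"
      have h: "0 < h" "h < d" "h \<le> (b - z)/2" using z d(1) unfolding h_def min_def by auto
      define z' where "z' = z + h"
      have z': "z < z'" "z' < b" "f z' < 0" using z h d(2)[OF h(1) h(2)] unfolding z'_def by auto
      obtain x where x: "z' \<le> x" "x \<le> b" "f x = 0"
        using IVT'[of f z' 0 b, OF _ _ _ contf] z' fb by auto
      have "x \<noteq> b" using x fb by auto
      then show ?thesis using that[of x] x z z' by auto
    next
      case False
      then have pz: "f1 z > 0" using fz1 by auto
      obtain d where d: "d > 0" "\<And>h. h > 0 \<Longrightarrow> h < d \<Longrightarrow> f (z - h) < f z"
        using DERIV_pos_inc_left[OF d1 pz] by blast
      define h where "h = min (d/2) ((z - a)/2)"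
      have h: "0 < h" "h < d" "h \<le> (z - a)/2" using z d(1) unfolding h_def min_def by auto
      define z' where "z' = z - h"
      have z': "z' < z" "a < z'" "f z' < 0" using z h d(2)[OF h(1) h(2)] unfolding z'_def by auto
      obtain x where x: "a \<le> x" "x \<le> z'" "f x = 0"
        using IVT2'[of f z' 0 a, OF _ _ _ contf] z' fa by auto
      have "x \<noteq> a" using x fa by auto
      then show ?thesis using that[of x] x z z' by auto
    qed
    have "?S = {z, w}"
    proof
      show "{z, w} \<subseteq> ?S" using z w by auto
      show "?S \<subseteq> {z, w}"
      proof
        fix u assume u: "u \<in> ?S"
        show "u \<in> {z, w}"
        proof (rule ccontr)
          assume "u \<notin> {z, w}"
          then have "u \<noteq> z" "u \<noteq> w" by auto
          then show False
          proof -
            assume a: "u \<noteq> z" "u \<noteq> w"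
            have "w \<noteq> z" using w by simp
            consider "u < z" "z < w" | "u < w" "w < z" | "z < u" "u < w" | "w < u" "u < z"
              | "z < w" "w < u" | "w < z" "z < u"
              using a \<open>w \<noteq> z\<close> by linarith
            then show False
              by cases (use no3 u z w(1) in blast)+
          qed
        qed
      qed
    qed
    then show ?thesis using w by simp
  qed
qed

theorem mainTheorem16:
  fixes D :: "nat \<Rightarrow> real \<Rightarrow> (real^'n) \<times> (real^'n)" and L :: real
  assumes smooth: "\<And>k t. (D k has_vector_derivative D (Suc k) t) (at t)"
    and L_pos: "L > 0"
    and closed: "\<And>t. D 0 (t + L) = D 0 t"
    and normalized: "\<And>t. symp (D 1 t) (D 2 t) = 1"
  shows "\<exists>\<epsilon>>0. \<epsilon> < L / 2 \<and> (\<exists>\<delta>>0. \<forall>t0 P.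
           norm (P - D 0 t0) < \<delta> \<and> P \<notin> wall (D 0) (D 1) (D 2) \<longrightarrow>
           (let S = {t. \<bar>t - t0\<bar> < \<epsilon> \<and> symp (D 1 t) (P - D 0 t) = 0}
            in finite S \<and> (card S = 0 \<or> card S = 2)))"
proof -
  have per: "D k (t + L) = D k t" for k t
  proof (induction k arbitrary: t)
    case 0 then show ?case using closed by simp
  next
    case (Suc k)
    have sh: "((\<lambda>s. s + L) has_vector_derivative 1) (at t)"
      by (auto intro!: derivative_eq_intros)
    have "((\<lambda>s. D k (s + L)) has_vector_derivative D (Suc k) (t + L)) (at t)"
      using vector_diff_chain_at[OF sh smooth[of k "t + L"]] by (simp add: o_def)
    moreover have "(\<lambda>s. D k (s + L)) = D k" using Suc by auto
    ultimately have "(D k has_vector_derivative D (Suc k) (t + L)) (at t)" by simp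
    then show ?case using vector_derivative_unique_at[OF _ smooth[of k t]] by blast
  qed
  have s0: "(D 0 has_vector_derivative D 1 t) (at t)" for t using smooth[of 0 t] by simp
  have s1: "(D 1 has_vector_derivative D 2 t) (at t)" for t using smooth[of 1 t] by (simp add: eval_nat_numeral)
  have s2: "(D 2 has_vector_derivative D 3 t) (at t)" for t using smooth[of 2 t] by (simp add: eval_nat_numeral)
  have cont: "continuous_on UNIV (D k)" for k
    by (intro continuous_at_imp_continuous_on ballI has_vector_derivative_continuous[OF smooth])
  obtain B1 where B1: "\<And>t. norm (D 1 t) \<le> B1"
    using periodic_bounded[OF cont L_pos per] by blast
  obtain B2 where B2: "\<And>t. norm (D 2 t) \<le> B2"
    using periodic_bounded[OF cont L_pos per] by blast
  obtain B3 where B3: "\<And>t. norm (D 3 t) \<le> B3"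
    using periodic_bounded[OF cont L_pos per] by blast
  define M where "M = max 1 (max B1 (max B2 B3))"
  have M1: "M \<ge> 1" unfolding M_def by simp
  have MB1: "norm (D 1 t) \<le> M" for t using B1[of t] unfolding M_def by linarith
  have MB2: "norm (D 2 t) \<le> M" for t using B2[of t] unfolding M_def by linarith
  have MB3: "norm (D 3 t) \<le> M" for t using B3[of t] unfolding M_def by linarith
  define \<epsilon> where "\<epsilon> = min (L / 4) (1 / (8 * M^2))"
  define \<delta> where "\<delta> = min (1 / (8 * M)) (\<epsilon>^2 / (32 * M))"
  have Mpos: "M > 0" using M1 by simp
  have eps_pos: "\<epsilon> > 0" unfolding \<epsilon>_def using L_pos Mpos by simp
  have eps_L: "\<epsilon> < L / 2" unfolding \<epsilon>_def using L_pos by simp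
  have eps_M: "M * \<epsilon> \<le> 1 / (8 * M)"
  proof -
    have "M * \<epsilon> \<le> M * (1 / (8 * M^2))" unfolding \<epsilon>_def using Mpos by (intro mult_left_mono) auto
    also have "\<dots> = 1 / (8 * M)" using Mpos by (simp add: power2_eq_square field_simps)
    finally show ?thesis .
  qed
  have eps_1: "\<epsilon> \<le> 1"
  proof -
    have "1 \<le> 8 * M^2" using one_le_power[OF M1, of 2] by linarith
    then have "1 / (8 * M^2) \<le> 1" by (simp add: divide_le_eq_1)
    then show ?thesis unfolding \<epsilon>_def by linarith
  qed
  have del_pos: "\<delta> > 0" unfolding \<delta>_def using Mpos eps_pos by simp
  have del1: "\<delta> \<le> 1 / (8 * M)" unfolding \<delta>_def by simp
  have del2: "4 * M * \<delta> \<le> \<epsilon>^2 / 8"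
  proof -
    have "\<delta> \<le> \<epsilon>^2 / (32 * M)" unfolding \<delta>_def by simp
    then have "4 * M * \<delta> \<le> 4 * M * (\<epsilon>^2 / (32 * M))" by (rule mult_left_mono) (use Mpos in auto)
    also have "\<dots> = \<epsilon>^2 / 8" using Mpos by (simp add: field_simps)
    finally show ?thesis .
  qed
  have main: "finite {t. \<bar>t - t0\<bar> < \<epsilon> \<and> symp (D 1 t) (P - D 0 t) = 0} \<and>
      (card {t. \<bar>t - t0\<bar> < \<epsilon> \<and> symp (D 1 t) (P - D 0 t) = 0} = 0 \<or>
       card {t. \<bar>t - t0\<bar> < \<epsilon> \<and> symp (D 1 t) (P - D 0 t) = 0} = 2)"
    if P: "norm (P - D 0 t0) < \<delta>" and nwall: "P \<notin> wall (D 0) (D 1) (D 2)" for t0 P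
  proof -
    define f where "f t = symp (D 1 t) (P - D 0 t)" for t
    define f1 where "f1 t = symp (D 2 t) (P - D 0 t)" for t
    define f2 where "f2 t = symp (D 3 t) (P - D 0 t) + 1" for t
    have dP: "((\<lambda>t. P - D 0 t) has_vector_derivative - D 1 t) (at t)" for t
      using s0[of t] by (auto intro!: derivative_eq_intros)
    have d1: "(f has_real_derivative f1 t) (at t)" for t
      using deriv_symp[OF s1[of t] dP[of t]]
      unfolding f_def f1_def by (simp add: symp_neg_right symp_self)
    have d2: "(f1 has_real_derivative f2 t) (at t)" for t
      using deriv_symp[OF s2[of t] dP[of t]] normalized[of t] symp_anti[of "D 1 t" "D 2 t"]
      unfolding f1_def f2_def by (simp add: symp_neg_right)
    have near: "norm (P - D 0 t) \<le> 1 / (4 * M)" if "\<bar>t - t0\<bar> \<le> \<epsilon>" for t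
    proof -
      have "norm (D 0 t - D 0 t0) \<le> M * \<bar>t - t0\<bar>"
        by (rule mvt_bound[OF s0 MB1])
      also have "\<dots> \<le> M * \<epsilon>" using that Mpos by simp
      finally have a: "norm (D 0 t - D 0 t0) \<le> 1 / (8 * M)" using eps_M by linarith
      have "norm (P - D 0 t) \<le> norm (P - D 0 t0) + norm (D 0 t - D 0 t0)"
      proof -
        have "P - D 0 t = (P - D 0 t0) + (D 0 t0 - D 0 t)" by simp
        then have "norm (P - D 0 t) \<le> norm (P - D 0 t0) + norm (D 0 t0 - D 0 t)"
          by (metis norm_triangle_ineq)
        then show ?thesis by (simp add: norm_minus_commute)
      qed
      also have "\<dots> \<le> 1 / (8 * M) + 1 / (8 * M)" using a P del1 by linarith
      also have "\<dots> = 1 / (4 * M)" by simp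
      finally show ?thesis .
    qed
    have f2pos: "f2 t \<ge> 1/2" if "\<bar>t - t0\<bar> \<le> \<epsilon>" for t
    proof -
      have "\<bar>symp (D 3 t) (P - D 0 t)\<bar> \<le> 2 * norm (D 3 t) * norm (P - D 0 t)" by (rule symp_bound)
      also have "\<dots> \<le> 2 * M * (1 / (4 * M))"
        using MB3[of t] near[OF that] Mpos by (intro mult_mono) auto
      also have "\<dots> = 1/2" using Mpos by simp
      finally show ?thesis unfolding f2_def by linarith
    qed
    have ft0: "\<bar>f t0\<bar> \<le> 2 * M * \<delta>"
    proof -
      have "\<bar>f t0\<bar> \<le> 2 * norm (D 1 t0) * norm (P - D 0 t0)" unfolding f_def by (rule symp_bound)
      also have "\<dots> \<le> 2 * M * \<delta>" using MB1[of t0] P Mpos by (intro mult_mono) auto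
      finally show ?thesis .
    qed
    have f1t0: "\<bar>f1 t0\<bar> \<le> 2 * M * \<delta>"
    proof -
      have "\<bar>f1 t0\<bar> \<le> 2 * norm (D 2 t0) * norm (P - D 0 t0)" unfolding f1_def by (rule symp_bound)
      also have "\<dots> \<le> 2 * M * \<delta>" using MB2[of t0] P Mpos by (intro mult_mono) auto
      finally show ?thesis .
    qed
    have f1e: "\<bar>f1 t0 * \<epsilon>\<bar> \<le> 2 * M * \<delta>"
    proof -
      have "\<bar>f1 t0 * \<epsilon>\<bar> = \<bar>f1 t0\<bar> * \<epsilon>" using eps_pos by (simp add: abs_mult)
      also have "\<dots> \<le> 2 * M * \<delta> * 1" using f1t0 eps_1 eps_pos by (intro mult_mono) auto
      finally show ?thesis by simp
    qed
    have epos2: "\<epsilon>^2 > 0" using eps_pos by simp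
    have fr: "f (t0 + \<epsilon>) > 0"
    proof -
      have "f (t0 + \<epsilon>) \<ge> f t0 + f1 t0 * \<epsilon> + (1/2) * \<epsilon>^2 / 2"
        by (rule taylor_lb_right[OF d1 d2]) (use f2pos eps_pos in auto)
      then show ?thesis using ft0 f1e del2 epos2 by linarith
    qed
    have fl: "f (t0 - \<epsilon>) > 0"
    proof -
      have "f (t0 - \<epsilon>) \<ge> f t0 - f1 t0 * \<epsilon> + (1/2) * \<epsilon>^2 / 2"
        by (rule taylor_lb_left[OF d1 d2]) (use f2pos eps_pos in auto)
      then show ?thesis using ft0 f1e del2 epos2 by linarith
    qed
    have nw: "f1 t \<noteq> 0" if "f t = 0" for t
    proof
      assume "f1 t = 0"
      then have "symp (P - D 0 t) (D 1 t) = 0 \<and> symp (P - D 0 t) (D 2 t) = 0"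
        using that symp_anti[of "P - D 0 t" "D 1 t"] symp_anti[of "P - D 0 t" "D 2 t"]
        unfolding f_def f1_def by simp
      then have "P \<in> wall (D 0) (D 1) (D 2)" unfolding wall_def by blast
      then show False using nwall by simp
    qed
    have zc: "finite {t. t0 - \<epsilon> < t \<and> t < t0 + \<epsilon> \<and> f t = 0} \<and>
         (card {t. t0 - \<epsilon> < t \<and> t < t0 + \<epsilon> \<and> f t = 0} = 0 \<or> card {t. t0 - \<epsilon> < t \<and> t < t0 + \<epsilon> \<and> f t = 0} = 2)"
    proof (rule zero_count[OF d1 d2 _ fl fr])
      fix t assume t: "t0 - \<epsilon> \<le> t" "t \<le> t0 + \<epsilon>"
      then have "\<bar>t - t0\<bar> \<le> \<epsilon>" by (simp add: abs_le_iff)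
      then show "0 < f2 t" using f2pos[of t] by linarith
    next
      fix t assume "t0 - \<epsilon> < t" "t < t0 + \<epsilon>" "f t = 0"
      then show "f1 t \<noteq> 0" using nw by blast
    qed
    have eq: "{t. \<bar>t - t0\<bar> < \<epsilon> \<and> symp (D 1 t) (P - D 0 t) = 0} = {t. t0 - \<epsilon> < t \<and> t < t0 + \<epsilon> \<and> f t = 0}"
      unfolding f_def by auto
    show ?thesis unfolding eq using zc .
  qed
  show ?thesis
    using eps_pos eps_L del_pos main unfolding Let_def by blast
qed

end
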